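(* Let $n\ge 1$, $m\ge 1$, and suppose: each $u_x$ ($x=1,\dots,m$) is concave and differentiable; $c$ is convex and differentiable; and at least one of the following holds: (a) all but at most one of the $u_x$ are strictly concave, or (b) $c$ is strictly convex. Then the potential function $$\Phi(\mathbf{s})=\sum_{x=1}^m\left[\left(1-\frac1n\right)\int_0^{s_x}\frac{u_x(t)}{t}\,\mathrm{d}t+\frac1n u_x(s_x)\right]-n\,c(\mathbf{s}/n)$$ is strictly concave on $n\Delta^{m-1}=\{\mathbf{s}\in\mathbb{R}^m:\mathbf{s}\ge0,\ \sum_x s_x=n\}$.
   Context: Here $\Delta^{m-1}=\{\mathbf{v}\in\mathbb{R}^m:\mathbf{v}\ge 0,\ \mathbf{v}^{T}\mathbf{1}=1\}$; for each $x\in\{1,\dots,m\}$, $u_x:\mathbb{R}_{\ge 0}\to\mathbb{R}_{\ge 0}$ satisfies $u_x(0)=0$; and $c:\Delta^{m-1}\to\mathbb{R}_{\ge 0}$. *)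

theory Defs
  imports "HOL-Analysis.Analysis"
begin

definition strict_convex_on :: "'a::real_vector set \<Rightarrow> ('a \<Rightarrow> real) \<Rightarrow> bool" where
  "strict_convex_on S f \<longleftrightarrow> convex S \<and>
     (\<forall>x\<in>S. \<forall>y\<in>S. x \<noteq> y \<longrightarrow> (\<forall>t::real. 0 < t \<and> t < 1 \<longrightarrow>
        f ((1 - t) *\<^sub>R x + t *\<^sub>R y) < (1 - t) * f x + t * f y))"

definition strict_concave_on :: "'a::real_vector set \<Rightarrow> ('a \<Rightarrow> real) \<Rightarrow> bool" where
  "strict_concave_on S f \<longleftrightarrow> strict_convex_on S (\<lambda>x. - f x)"

definition std_simplex :: "(real^'m) set" where
  "std_simplex = {v. (\<forall>i. 0 \<le> v $ i) \<and> (\<Sum>i\<in>UNIV. v $ i) = 1}"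

definition scaled_simplex :: "real \<Rightarrow> (real^'m) set" where
  "scaled_simplex a = {s. (\<forall>i. 0 \<le> s $ i) \<and> (\<Sum>i\<in>UNIV. s $ i) = a}"

definition potential :: "nat \<Rightarrow> ('m \<Rightarrow> real \<Rightarrow> real) \<Rightarrow> (real^'m \<Rightarrow> real) \<Rightarrow> real^'m \<Rightarrow> real" where
  "potential n u c s =
     (\<Sum>x\<in>UNIV. (1 - 1 / real n) * integral {0..s $ x} (\<lambda>t. u x t / t)
               + (1 / real n) * u x (s $ x))
     - real n * c ((1 / real n) *\<^sub>R s)"

end

theory Submission
  imports Defs
begin

lemma ratio_antimono:
  fixes f :: "real \<Rightarrow> real"
  assumes "concave_on {0..} f" "f 0 = 0" "0 < a" "a \<le> b"
  shows "f b / b \<le> f a / a"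
proof -
  have "(1 - a/b) * f 0 + (a/b) * f b \<le> f ((1 - a/b) *\<^sub>R 0 + (a/b) *\<^sub>R b)"
    using concave_onD[OF assms(1), of "a/b" 0 b] assms by auto
  then have "(a/b) * f b \<le> f a" using assms by simp
  then show ?thesis using assms by (simp add: field_simps)
qed

lemma ratio_bound:
  fixes f :: "real \<Rightarrow> real"
  assumes "concave_on {0..} f" "f 0 = 0" "(f has_real_derivative D) (at 0 within {0..})" "0 < t"
  shows "f t / t \<le> D"
proof -
  have lim: "((\<lambda>y. f y / y) \<longlongrightarrow> D) (at_right 0)"
    using assms(3) unfolding has_field_derivative_iff at_within_Ici_at_right using assms(2) by simp
  have ev: "\<forall>\<^sub>F y in at_right 0. f t / t \<le> f y / y"
    unfolding eventually_at_right_field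
    using assms ratio_antimono[OF assms(1,2)] by (intro exI[of _ t]) auto
  show ?thesis
    by (rule tendsto_le[OF trivial_limit_at_right_real lim tendsto_const ev])
qed

lemma antimono_integral_concave:
  fixes G :: "real \<Rightarrow> real"
  assumes G: "\<And>x y. x \<le> y \<Longrightarrow> G y \<le> G x" and "0 \<le> a" "a \<le> b" "0 \<le> t" "t \<le> 1"
  shows "(1-t)*integral {0..a} G + t*integral {0..b} G \<le> integral {0..(1-t)*a+t*b} G"
proof -
  have int: "G integrable_on {p..q}" for p q
  proof -
    have "mono_on {p..q} (\<lambda>x. - G x)" by (intro mono_onI) (use G in force)
    then have "(\<lambda>x. - G x) integrable_on {p..q}" by (rule integrable_on_mono_on)
    then show ?thesis using integrable_neg by fastforce
  qed
  define m where "m = (1-t)*a+t*b"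
  have e1: "m - a = t * (b - a)" "b - m = (1-t)*(b-a)" unfolding m_def by (simp_all add: algebra_simps)
  have p1: "0 \<le> t * (b - a)" "0 \<le> (1-t)*(b-a)" using assms by simp_all
  have am1: "a \<le> m" using e1(1) p1(1) by linarith
  have am2: "m \<le> b" using e1(2) p1(2) by linarith
  note am = am1 am2
  have c1: "integral {0..m} G = integral {0..a} G + integral {a..m} G"
    using Henstock_Kurzweil_Integration.integral_combine[OF assms(2) am(1) int] by simp
  have c2: "integral {0..b} G = integral {0..m} G + integral {m..b} G"
    using Henstock_Kurzweil_Integration.integral_combine[of 0 m b, OF _ am(2) int] assms am by simp
  have i1: "(m - a) * G m \<le> integral {a..m} G"
  proof -
    have "integral {a..m} (\<lambda>x. G m) \<le> integral {a..m} G"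
      by (rule integral_le) (auto simp: int G)
    then show ?thesis using am by simp
  qed
  have i2: "integral {m..b} G \<le> (b - m) * G m"
  proof -
    have "integral {m..b} G \<le> integral {m..b} (\<lambda>x. G m)"
      by (rule integral_le) (auto simp: int G)
    then show ?thesis using am by simp
  qed
  have "t * integral {m..b} G \<le> t * ((1-t)*(b-a) * G m)"
    using i2 e1 assms by (simp add: mult_left_mono)
  also have "\<dots> = (1-t) * ((m-a) * G m)" using e1 by simp
  also have "\<dots> \<le> (1-t) * integral {a..m} G" using i1 assms by (simp add: mult_left_mono)
  finally show ?thesis unfolding m_def[symmetric] using c1 c2 by (simp add: algebra_simps)
qed

lemma coord_concave:
  fixes f :: "real \<Rightarrow> real"
  assumes conc: "concave_on {0..} f" and f0: "f 0 = 0" and fd: "f differentiable_on {0..}"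
    and "0 \<le> p" "0 \<le> q" "0 \<le> t" "t \<le> 1"
  shows "(1-t)*integral {0..p} (\<lambda>s. f s / s) + t*integral {0..q} (\<lambda>s. f s / s)
          \<le> integral {0..(1-t)*p+t*q} (\<lambda>s. f s / s)"
proof -
  obtain D where D: "(f has_real_derivative D) (at 0 within {0..})"
    using fd unfolding differentiable_on_def real_differentiable_def by auto
  define G where "G = (\<lambda>s::real. if s \<le> 0 then D else f s / s)"
  have Gm: "G y \<le> G x" if "x \<le> y" for x y
    using that ratio_bound[OF conc f0 D] ratio_antimono[OF conc f0] unfolding G_def by auto
  have eq: "integral {0..r} (\<lambda>s. f s / s) = integral {0..r} G" for r
    by (rule integral_spike[of "{0}"]) (auto simp: G_def)
  show ?thesis
  proof (cases "p \<le> q")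
    case True
    show ?thesis unfolding eq using antimono_integral_concave[of G p q t, OF Gm] True assms by auto
  next
    case False
    have "(1-(1-t))*integral {0..q} G + (1-t)*integral {0..p} G \<le> integral {0..(1-(1-t))*q+(1-t)*p} G"
      using antimono_integral_concave[of G q p "1-t", OF Gm] False assms by auto
    then show ?thesis unfolding eq by (simp add: algebra_simps)
  qed
qed

lemma convex_scaled_simplex: "convex (scaled_simplex a :: (real^'m::finite) set)"
  unfolding convex_def scaled_simplex_def
  by (auto simp: sum.distrib sum_distrib_left[symmetric]) (metis distrib_right mult_1)

theorem proposition4:
  fixes n :: nat
    and u :: "'m::finite \<Rightarrow> real \<Rightarrow> real"
    and c :: "real^'m \<Rightarrow> real"
  assumes n_ge: "n \<ge> 1"
    and u_nonneg: "\<And>x t. t \<ge> 0 \<Longrightarrow> u x t \<ge> 0"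
    and u_zero: "\<And>x. u x 0 = 0"
    and c_nonneg: "\<And>v. v \<in> std_simplex \<Longrightarrow> c v \<ge> 0"
    and u_concave: "\<And>x. concave_on {0..} (u x)"
    and u_diff: "\<And>x. u x differentiable_on {0..}"
    and c_convex: "convex_on std_simplex c"
    and c_diff: "c differentiable_on std_simplex"
    and strict: "card {x. \<not> strict_concave_on {0..} (u x)} \<le> 1
                 \<or> strict_convex_on std_simplex c"
  shows "strict_concave_on (scaled_simplex (real n)) (potential n u c)"
  unfolding strict_concave_on_def strict_convex_on_def
proof (intro conjI convex_scaled_simplex ballI impI allI)
  fix s s' :: "real^'m" and t :: real
  assume sS: "s \<in> scaled_simplex (real n)" and s'S: "s' \<in> scaled_simplex (real n)"
    and ne: "s \<noteq> s'" and t: "0 < t \<and> t < 1"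
  define z where "z = (1 - t) *\<^sub>R s + t *\<^sub>R s'"
  define h where "h = (\<lambda>x p. (1 - 1 / real n) * integral {0..p} (\<lambda>t. u x t / t) + (1 / real n) * u x p)"
  have pot: "potential n u c v = (\<Sum>x\<in>UNIV. h x (v $ x)) - real n * c ((1 / real n) *\<^sub>R v)" for v
    unfolding potential_def h_def by simp
  have zx: "z $ x = (1-t) * s $ x + t * s' $ x" for x unfolding z_def by simp
  have s0: "0 \<le> s $ x" "0 \<le> s' $ x" for x using sS s'S unfolding scaled_simplex_def by auto
  have n0: "0 < real n" using n_ge by simp
  have c1: "0 \<le> 1 - 1 / real n" using n_ge by (simp add: field_simps)
  have H: "(1-t) * h x (s $ x) + t * h x (s' $ x) \<le> h x (z $ x)" for x
  proof -
    have i: "(1-t)*integral {0..s$x} (\<lambda>t. u x t / t) + t*integral {0..s'$x} (\<lambda>t. u x t / t)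
          \<le> integral {0..z$x} (\<lambda>t. u x t / t)"
      unfolding zx using coord_concave[OF u_concave u_zero u_diff s0(1) s0(2), of t] t by auto
    have uu: "(1-t) * u x (s$x) + t * u x (s'$x) \<le> u x (z$x)"
      using concave_onD[OF u_concave, of t "s$x" "s'$x" x] t s0 unfolding zx by auto
    have "(1 - 1 / real n) * ((1-t)*integral {0..s$x} (\<lambda>t. u x t / t) + t*integral {0..s'$x} (\<lambda>t. u x t / t))
          \<le> (1 - 1 / real n) * integral {0..z$x} (\<lambda>t. u x t / t)"
      using i c1 by (rule mult_left_mono)
    moreover have "(1 / real n) * ((1-t) * u x (s$x) + t * u x (s'$x)) \<le> (1 / real n) * u x (z$x)"
      using uu n0 by (simp add: divide_right_mono)
    moreover have "(1-t) * h x (s $ x) + t * h x (s' $ x) = (1 - 1 / real n) * ((1-t)*integral {0..s$x} (\<lambda>t. u x t / t) + t*integral {0..s'$x} (\<lambda>t. u x t / t))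
       + (1 / real n) * ((1-t) * u x (s$x) + t * u x (s'$x))"
      using n0 unfolding h_def by (simp add: field_simps)
    moreover have "h x (z $ x) = (1 - 1 / real n) * integral {0..z$x} (\<lambda>t. u x t / t) + (1 / real n) * u x (z$x)"
      unfolding h_def by simp
    ultimately show ?thesis by linarith
  qed
  have HS: "(1-t) * h x (s $ x) + t * h x (s' $ x) < h x (z $ x)"
    if sc: "strict_concave_on {0..} (u x)" and d: "s $ x \<noteq> s' $ x" for x
  proof -
    have i: "(1-t)*integral {0..s$x} (\<lambda>t. u x t / t) + t*integral {0..s'$x} (\<lambda>t. u x t / t)
          \<le> integral {0..z$x} (\<lambda>t. u x t / t)"
      unfolding zx using coord_concave[OF u_concave u_zero u_diff s0(1) s0(2), of t] t by auto
    have uu: "(1-t) * u x (s$x) + t * u x (s'$x) < u x (z$x)"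
    proof -
      have "- u x ((1 - t) * s$x + t * s'$x) < - ((1 - t) * u x (s$x)) - t * u x (s'$x)"
        using sc d t s0[of x] unfolding strict_concave_on_def strict_convex_on_def by force
      then show ?thesis unfolding zx by simp
    qed
    have "(1 - 1 / real n) * ((1-t)*integral {0..s$x} (\<lambda>t. u x t / t) + t*integral {0..s'$x} (\<lambda>t. u x t / t))
          \<le> (1 - 1 / real n) * integral {0..z$x} (\<lambda>t. u x t / t)"
      using i c1 by (rule mult_left_mono)
    moreover have "(1 / real n) * ((1-t) * u x (s$x) + t * u x (s'$x)) < (1 / real n) * u x (z$x)"
      using uu n0 by (simp add: divide_strict_right_mono)
    moreover have "(1-t) * h x (s $ x) + t * h x (s' $ x) = (1 - 1 / real n) * ((1-t)*integral {0..s$x} (\<lambda>t. u x t / t) + t*integral {0..s'$x} (\<lambda>t. u x t / t))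
       + (1 / real n) * ((1-t) * u x (s$x) + t * u x (s'$x))"
      using n0 unfolding h_def by (simp add: field_simps)
    moreover have "h x (z $ x) = (1 - 1 / real n) * integral {0..z$x} (\<lambda>t. u x t / t) + (1 / real n) * u x (z$x)"
      unfolding h_def by simp
    ultimately show ?thesis by linarith
  qed
  define a where "a = (1 / real n) *\<^sub>R s"
  define b where "b = (1 / real n) *\<^sub>R s'"
  have zab: "(1 / real n) *\<^sub>R z = (1-t) *\<^sub>R a + t *\<^sub>R b"
    unfolding z_def a_def b_def using n0 by (simp add: vec_eq_iff field_simps)
  have aS: "a \<in> std_simplex" "b \<in> std_simplex"
    using sS s'S n0 unfolding a_def b_def std_simplex_def scaled_simplex_def
    by (auto simp: sum_divide_distrib[symmetric])
  have ab: "a \<noteq> b" using ne n0 unfolding a_def b_def by auto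
  have C: "c ((1 / real n) *\<^sub>R z) \<le> (1-t) * c a + t * c b"
    unfolding zab using convex_onD[OF c_convex, of t a b] aS t by auto
  have sumeq: "(\<Sum>x\<in>UNIV. (1-t) * h x (s $ x) + t * h x (s' $ x))
       = (1-t) * (\<Sum>x\<in>UNIV. h x (s $ x)) + t * (\<Sum>x\<in>UNIV. h x (s' $ x))"
    by (simp add: sum.distrib sum_distrib_left)
  have main: "(1-t) * (\<Sum>x\<in>UNIV. h x (s $ x)) + t * (\<Sum>x\<in>UNIV. h x (s' $ x)) - real n * ((1-t) * c a + t * c b)
      < (\<Sum>x\<in>UNIV. h x (z $ x)) - real n * c ((1 / real n) *\<^sub>R z)"
    using strict
  proof
    assume card: "card {x. \<not> strict_concave_on {0..} (u x)} \<le> 1"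
    obtain i where i: "s $ i \<noteq> s' $ i" using ne by (auto simp: vec_eq_iff)
    obtain j where j: "j \<noteq> i" "s $ j \<noteq> s' $ j"
    proof (rule ccontr)
      assume "\<not> thesis"
      with that have eqj: "\<And>j. j \<noteq> i \<Longrightarrow> s $ j = s' $ j" by blast
      have "(\<Sum>k\<in>UNIV. s $ k) = s $ i + (\<Sum>k\<in>UNIV - {i}. s $ k)"
        by (simp add: sum.remove)
      moreover have "(\<Sum>k\<in>UNIV. s' $ k) = s' $ i + (\<Sum>k\<in>UNIV - {i}. s' $ k)"
        by (simp add: sum.remove)
      moreover have "(\<Sum>k\<in>UNIV - {i}. s $ k) = (\<Sum>k\<in>UNIV - {i}. s' $ k)"
        using eqj by (intro sum.cong) auto
      moreover have "(\<Sum>k\<in>UNIV. s $ k) = (\<Sum>k\<in>UNIV. s' $ k)"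
        using sS s'S unfolding scaled_simplex_def by auto
      ultimately show False using i by linarith
    qed
    obtain k where k: "strict_concave_on {0..} (u k)" "s $ k \<noteq> s' $ k"
    proof (cases "strict_concave_on {0..} (u i)")
      case True then show ?thesis using that i by blast
    next
      case False
      show ?thesis
      proof (cases "strict_concave_on {0..} (u j)")
        case True then show ?thesis using that j by blast
      next
        case F2: False
        have "card {i, j} \<le> card {x. \<not> strict_concave_on {0..} (u x)}"
          using False F2 by (intro card_mono) auto
        then show ?thesis using card j by simp
      qed
    qed
    have "(\<Sum>x\<in>UNIV. (1-t) * h x (s $ x) + t * h x (s' $ x)) < (\<Sum>x\<in>UNIV. h x (z $ x))"
      by (rule sum_strict_mono_ex1) (use H HS[OF k] in auto)
    moreover have "real n * c ((1 / real n) *\<^sub>R z) \<le> real n * ((1-t) * c a + t * c b)"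
      using C n0 by simp
    ultimately show ?thesis using sumeq by linarith
  next
    assume sc: "strict_convex_on std_simplex c"
    have "c ((1 / real n) *\<^sub>R z) < (1-t) * c a + t * c b"
      using sc aS ab t unfolding zab strict_convex_on_def by auto
    then have "real n * c ((1 / real n) *\<^sub>R z) < real n * ((1-t) * c a + t * c b)"
      using n0 by simp
    moreover have "(\<Sum>x\<in>UNIV. (1-t) * h x (s $ x) + t * h x (s' $ x)) \<le> (\<Sum>x\<in>UNIV. h x (z $ x))"
      by (rule sum_mono) (use H in auto)
    ultimately show ?thesis using sumeq by linarith
  qed
  show "- potential n u c ((1 - t) *\<^sub>R s + t *\<^sub>R s') < (1 - t) * - potential n u c s + t * - potential n u c s'"
    using main unfolding pot z_def[symmetric] a_def b_def by (simp add: algebra_simps)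
qed

end
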